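(* Suppose Assumptions 1, 2, 3 and 4 below hold (with all expectations involved finite). Let $\alpha=\big(P(D_{11}=1)-P(D_{10}=1)\big)/DID_D$, let $S'=\{D(0)\neq D(1),\,G=0\}$ and $\Delta'=E\big(Y(1)-Y(0)\mid S',T=1\big)$ (with the convention that $(1-\alpha)\Delta'=0$ when $P(S')=0$, in which case $\alpha=1$). Then 1. $W_{DID}=\alpha\Delta+(1-\alpha)\Delta'$. 2. If in addition either $\Delta=\Delta'$, or Assumption 5 holds, then $W_{DID}=\Delta$.
   Context: Standing framework. Let $(Y(0),Y(1),V,G,T)$ be random variables on a common probability space, with $G\in\{0,1\}$ (group; $G=1$ is the "treatment group"), $T\in\{0,1\}$ (period), $V$ real-valued, and let $(v_{gt})_{(g,t)\in\{0,1\}^2}$ be real constants. The treatment is $D=1\{V\geq v_{GT}\}$ and the potential treatments are $D(t)=1\{V\geq v_{Gt}\}$, $t\in\{0,1\}$, so that $D=D(T)$. The observed outcome is $Y=DY(1)+(1-D)Y(0)$. For any random variable $R$, $R_{gt}$ denotes a random variable distributed as $R$ conditional on $\{G=g,T=t\}$ and $R_{dgt}$ one distributed as $R$ conditional on $\{D=d,G=g,T=t\}$; e.g. $Y_{gt}(d)$ is distributed as $Y(d)$ given $G=g,T=t$. $F_R$ is the cdf of $R$, $F_{R\mid A}$ its cdf conditional on $A$, and for a nondecreasing $F$, $F^{-1}(q)=\inf\{x\in\mathbb{R}:F(x)\geq q\}$. Let $S=\{D(0)<D(1),\,G=1\}$ (treatment-group switchers) and $\Delta=E(Y(1)-Y(0)\mid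 S,T=1)$. Assumption 1: $D=1\{V\geq v_{GT}\}$ with $V$ independent of $T$ conditional on $G$. Assumption 2: $E(D_{11})>E(D_{10})$ and $E(D_{11})-E(D_{10})>E(D_{01})-E(D_{00})$. Assumption 3 (common trends): $E(Y(0)\mid G,T=1)-E(Y(0)\mid G,T=0)$ does not depend on $G$. Assumption 4: $E(Y(1)-Y(0)\mid G,T=1,D(0)=1)=E(Y(1)-Y(0)\mid G,T=0,D(0)=1)$. Assumption 5: $0<E(D_{01})=E(D_{00})<1$. For any random variable $R$, $DID_R=E(R_{11})-E(R_{10})-\big(E(R_{01})-E(R_{00})\big)$, and $W_{DID}=DID_Y/DID_D$. *)

theory Defs
  imports "HOL-Probability.Probability"
begin

text \<open>Groups and periods are encoded as booleans: True = 1, False = 0.\<close>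

definition ev :: "'a measure \<Rightarrow> ('a \<Rightarrow> bool) \<Rightarrow> 'a set" where
  "ev M P = {x \<in> space M. P x}"

text \<open>Elementary conditional expectation of X given the event A,
  E(X | A) = E(X 1_A) / P(A) (equal to 0 by the convention x/0 = 0 when P(A) = 0).\<close>
definition cexp :: "'a measure \<Rightarrow> ('a \<Rightarrow> real) \<Rightarrow> 'a set \<Rightarrow> real" where
  "cexp M X A = (LINT x:A|M. X x) / measure M A"

definition cprob :: "'a measure \<Rightarrow> 'a set \<Rightarrow> 'a set \<Rightarrow> real" where
  "cprob M A B = measure M (A \<inter> B) / measure M B"

definition Dtr :: "(bool \<Rightarrow> bool \<Rightarrow> real) \<Rightarrow> ('a \<Rightarrow> bool) \<Rightarrow> ('a \<Rightarrow> bool) \<Rightarrow> ('a \<Rightarrow> real) \<Rightarrow> 'a \<Rightarrow> real" where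
  "Dtr v G T V x = (if V x \<ge> v (G x) (T x) then 1 else 0)"

definition Dpot :: "(bool \<Rightarrow> bool \<Rightarrow> real) \<Rightarrow> ('a \<Rightarrow> bool) \<Rightarrow> ('a \<Rightarrow> real) \<Rightarrow> bool \<Rightarrow> 'a \<Rightarrow> real" where
  "Dpot v G V t x = (if V x \<ge> v (G x) t then 1 else 0)"

definition Yobs :: "(bool \<Rightarrow> bool \<Rightarrow> real) \<Rightarrow> ('a \<Rightarrow> bool) \<Rightarrow> ('a \<Rightarrow> bool) \<Rightarrow> ('a \<Rightarrow> real)
    \<Rightarrow> ('a \<Rightarrow> real) \<Rightarrow> ('a \<Rightarrow> real) \<Rightarrow> 'a \<Rightarrow> real" where
  "Yobs v G T V Y0 Y1 x = Dtr v G T V x * Y1 x + (1 - Dtr v G T V x) * Y0 x"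

definition Egt :: "'a measure \<Rightarrow> ('a \<Rightarrow> bool) \<Rightarrow> ('a \<Rightarrow> bool) \<Rightarrow> ('a \<Rightarrow> real) \<Rightarrow> bool \<Rightarrow> bool \<Rightarrow> real" where
  "Egt M G T R g t = cexp M R (ev M (\<lambda>x. G x = g \<and> T x = t))"

definition DID :: "'a measure \<Rightarrow> ('a \<Rightarrow> bool) \<Rightarrow> ('a \<Rightarrow> bool) \<Rightarrow> ('a \<Rightarrow> real) \<Rightarrow> real" where
  "DID M G T R = Egt M G T R True True - Egt M G T R True False
                 - (Egt M G T R False True - Egt M G T R False False)"

end

theory Submission
  imports Defs
begin

lemma setint_cexp:
  fixes f :: "'a \<Rightarrow> real"
  assumes P: "prob_space M" and f: "integrable M f" and A: "A \<in> sets M"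
  shows "(LINT x:A|M. f x) = cexp M f A * measure M A"
proof (cases "measure M A = 0")
  case True
  interpret prob_space M by (rule P)
  have "A \<in> null_sets M" using A True by (auto simp: null_sets_def emeasure_eq_measure)
  then have "(LINT x:A|M. f x) = (LINT x:{}|M. f x)"
    by (intro set_integral_null_delta) (use f A in auto)
  then show ?thesis using True by (simp add: set_lebesgue_integral_def)
next
  case False then show ?thesis by (simp add: cexp_def)
qed

lemma setint_split:
  fixes f :: "'a \<Rightarrow> real"
  assumes P: "prob_space M" and f: "integrable M f" and A: "A \<in> sets M" and B: "B \<in> sets M"
    and d: "A \<inter> B = {}"
  shows "(LINT x:A\<union>B|M. f x) = (LINT x:A|M. f x) + (LINT x:B|M. f x)"
    and "measure M (A\<union>B) = measure M A + measure M B"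
proof -
  interpret prob_space M by (rule P)
  show "(LINT x:A\<union>B|M. f x) = (LINT x:A|M. f x) + (LINT x:B|M. f x)"
  proof (rule set_integral_Un[OF d])
    show "set_integrable M A f" unfolding set_integrable_def by (rule integrable_mult_indicator[OF A f])
    show "set_integrable M B f" unfolding set_integrable_def by (rule integrable_mult_indicator[OF B f])
  qed
  show "measure M (A\<union>B) = measure M A + measure M B"
    by (rule finite_measure_Union[OF A B d])
qed

theorem theorem1:
  fixes M :: "'a measure"
    and Y0 Y1 V :: "'a \<Rightarrow> real"
    and G T :: "'a \<Rightarrow> bool"
    and v :: "bool \<Rightarrow> bool \<Rightarrow> real"
  assumes P: "prob_space M"
    and measG: "G \<in> measurable M (count_space UNIV)"
    and measT: "T \<in> measurable M (count_space UNIV)"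
    and measV: "V \<in> borel_measurable M"
    and intY0: "integrable M Y0"
    and intY1: "integrable M Y1"
    and cells: "\<And>g t. measure M (ev M (\<lambda>x. G x = g \<and> T x = t)) > 0"
    \<comment> \<open>Assumption 1: V independent of T conditional on G\<close>
    and A1: "\<And>g t B. B \<in> sets borel \<Longrightarrow>
        measure M (ev M (\<lambda>x. V x \<in> B \<and> T x = t \<and> G x = g)) * measure M (ev M (\<lambda>x. G x = g))
        = measure M (ev M (\<lambda>x. V x \<in> B \<and> G x = g)) * measure M (ev M (\<lambda>x. T x = t \<and> G x = g))"
    \<comment> \<open>Assumption 2\<close>
    and A2a: "Egt M G T (Dtr v G T V) True True > Egt M G T (Dtr v G T V) True False"
    and A2b: "Egt M G T (Dtr v G T V) True True - Egt M G T (Dtr v G T V) True False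
              > Egt M G T (Dtr v G T V) False True - Egt M G T (Dtr v G T V) False False"
    \<comment> \<open>Assumption 3: common trends\<close>
    and A3: "Egt M G T Y0 True True - Egt M G T Y0 True False
             = Egt M G T Y0 False True - Egt M G T Y0 False False"
    \<comment> \<open>Assumption 4\<close>
    and A4: "\<And>g. cexp M (\<lambda>x. Y1 x - Y0 x) (ev M (\<lambda>x. G x = g \<and> T x \<and> Dpot v G V False x = 1))
               = cexp M (\<lambda>x. Y1 x - Y0 x) (ev M (\<lambda>x. G x = g \<and> \<not> T x \<and> Dpot v G V False x = 1))"
  shows
    "(let D = Dtr v G T V;
          Y = Yobs v G T V Y0 Y1;
          W = DID M G T Y / DID M G T D;
          \<alpha> = (cprob M (ev M (\<lambda>x. D x = 1)) (ev M (\<lambda>x. G x \<and> T x))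
               - cprob M (ev M (\<lambda>x. D x = 1)) (ev M (\<lambda>x. G x \<and> \<not> T x))) / DID M G T D;
          \<Delta> = cexp M (\<lambda>x. Y1 x - Y0 x)
                 (ev M (\<lambda>x. Dpot v G V False x < Dpot v G V True x \<and> G x \<and> T x));
          \<Delta>' = cexp M (\<lambda>x. Y1 x - Y0 x)
                 (ev M (\<lambda>x. Dpot v G V False x \<noteq> Dpot v G V True x \<and> \<not> G x \<and> T x))
      in W = \<alpha> * \<Delta> + (1 - \<alpha>) * \<Delta>'
         \<and> ((\<Delta> = \<Delta>' \<or> (0 < Egt M G T D False True \<and> Egt M G T D False True = Egt M G T D False False
                         \<and> Egt M G T D False False < 1))
            \<longrightarrow> W = \<Delta>))"
proof -
  interpret prob_space M by (rule P)
  note [measurable] = measG measT measV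
  define dY where "dY = (\<lambda>x. Y1 x - Y0 x)"
  have intdY: "integrable M dY" using intY0 intY1 by (simp add: dY_def)
  define C where "C g t = ev M (\<lambda>x. G x = g \<and> T x = t)" for g t
  define U where "U g t c = ev M (\<lambda>x. G x = g \<and> T x = t \<and> c \<le> V x)" for g t c
  define Wd where "Wd g t a b = ev M (\<lambda>x. G x = g \<and> T x = t \<and> a \<le> V x \<and> V x < b)" for g t a b
  define p where "p g t = measure M (C g t)" for g t
  define q where "q g t c = measure M (U g t c)" for g t c
  define J where "J g t c = (LINT x:U g t c|M. dY x)" for g t c
  have Cs[measurable]: "C g t \<in> sets M" for g t unfolding C_def ev_def by measurable
  have Us[measurable]: "U g t c \<in> sets M" for g t c unfolding U_def ev_def by measurable
  have Ws[measurable]: "Wd g t a b \<in> sets M" for g t a b unfolding Wd_def ev_def by measurable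
  have pp: "p g t > 0" for g t using cells[of g t] by (simp add: p_def C_def)
  have F1: "Egt M G T (Dtr v G T V) g t = q g t (v g t) / p g t" for g t
  proof -
    have "(LINT x:C g t|M. Dtr v G T V x) = integral\<^sup>L M (indicator (U g t (v g t)))"
      unfolding set_lebesgue_integral_def
      apply (intro Bochner_Integration.integral_cong refl)
      subgoal for x by (cases "G x"; cases "T x"; cases g; cases t; simp add: indicator_def C_def U_def ev_def Dtr_def)
      done
    also have "\<dots> = q g t (v g t)" by (simp add: q_def)
    finally show ?thesis by (simp add: Egt_def cexp_def p_def C_def)
  qed
  have F2: "Egt M G T (Yobs v G T V Y0 Y1) g t = Egt M G T Y0 g t + J g t (v g t) / p g t" for g t
  proof -
    have "(LINT x:C g t|M. Yobs v G T V Y0 Y1 x)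
        = integral\<^sup>L M (\<lambda>x. indicator (C g t) x * Y0 x + indicator (U g t (v g t)) x * dY x)"
      unfolding set_lebesgue_integral_def
      apply (intro Bochner_Integration.integral_cong refl)
      subgoal for x by (cases "G x"; cases "T x"; cases g; cases t; simp add: indicator_def C_def U_def ev_def Dtr_def Yobs_def dY_def algebra_simps)
      done
    also have "\<dots> = (LINT x:C g t|M. Y0 x) + J g t (v g t)"
      unfolding J_def set_lebesgue_integral_def
      using integrable_mult_indicator[OF Cs intY0] integrable_mult_indicator[OF Us intdY]
      by (simp add: Bochner_Integration.integral_add)
    finally show ?thesis by (simp add: Egt_def cexp_def p_def C_def add_divide_distrib)
  qed
  have F3: "q g False c / p g False = q g True c / p g True" for g c
  proof -
    define E where "E = ev M (\<lambda>x. G x = g)"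
    define Ec where "Ec = ev M (\<lambda>x. V x \<in> {c..} \<and> G x = g)"
    have E[measurable]: "E \<in> sets M" unfolding E_def ev_def by measurable
    have key: "q g t c * measure M E = measure M Ec * p g t" for t
    proof -
      have e1: "ev M (\<lambda>x. V x \<in> {c..} \<and> T x = t \<and> G x = g) = U g t c" by (auto simp: U_def ev_def)
      have e2: "ev M (\<lambda>x. T x = t \<and> G x = g) = C g t" by (auto simp: C_def ev_def)
      show ?thesis using A1[of "{c..}" t g] unfolding e1 e2 by (simp add: q_def p_def E_def Ec_def)
    qed
    have "C g True \<subseteq> E" by (auto simp: C_def E_def ev_def)
    then have "p g True \<le> measure M E" unfolding p_def by (intro finite_measure_mono) auto
    then have "measure M E > 0" using pp[of g True] by linarith
    then have qq: "q g t c = measure M Ec * p g t / measure M E" for t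
      using key[of t] by (simp add: field_simps)
    show ?thesis using pp[of g True] pp[of g False] by (simp add: qq field_simps)
  qed
  have F4: "J g t c = cexp M dY (U g t c) * q g t c" for g t c
    unfolding J_def q_def by (rule setint_cexp[OF P intdY Us])
  have F5: "J g False (v g False) / p g False = J g True (v g False) / p g True" for g
  proof -
    have e1: "ev M (\<lambda>x. G x = g \<and> T x \<and> Dpot v G V False x = 1) = U g True (v g False)"
      by (auto simp: U_def ev_def Dpot_def)
    have e2: "ev M (\<lambda>x. G x = g \<and> \<not> T x \<and> Dpot v G V False x = 1) = U g False (v g False)"
      by (auto simp: U_def ev_def Dpot_def)
    have ce: "cexp M dY (U g True (v g False)) = cexp M dY (U g False (v g False))"
      using A4[of g] by (simp add: e1 e2 dY_def)
    show ?thesis using F3[of g "v g False"] unfolding F4 ce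
      by (metis times_divide_eq_right)
  qed
  have F6: "J g t a = J g t b + (LINT x:Wd g t a b|M. dY x) \<and> q g t a = q g t b + measure M (Wd g t a b)"
    if "a \<le> b" for g t a b
  proof -
    have u: "U g t a = U g t b \<union> Wd g t a b" using that by (auto simp: U_def Wd_def ev_def)
    have d: "U g t b \<inter> Wd g t a b = {}" by (auto simp: U_def Wd_def ev_def)
    show ?thesis unfolding J_def q_def u
      using setint_split[OF P intdY Us Ws d] by simp
  qed
  have Dv: "v True True < v True False"
  proof (rule ccontr)
    assume "\<not> ?thesis"
    then have "U True True (v True True) \<subseteq> U True True (v True False)" by (auto simp: U_def ev_def)
    then have "q True True (v True True) \<le> q True True (v True False)"
      unfolding q_def by (intro finite_measure_mono) auto
    moreover have "q True True (v True False) / p True True < q True True (v True True) / p True True"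
      using A2a F1[of True True] F1[of True False] F3[of True "v True False"] by simp
    ultimately show False using pp[of True True] by (simp add: divide_less_cancel)
  qed
  define S where "S = ev M (\<lambda>x. Dpot v G V False x < Dpot v G V True x \<and> G x \<and> T x)"
  define S' where "S' = ev M (\<lambda>x. Dpot v G V False x \<noteq> Dpot v G V True x \<and> \<not> G x \<and> T x)"
  have SW: "S = Wd True True (v True True) (v True False)"
    unfolding S_def Wd_def ev_def Dpot_def by (auto split: if_splits)
  have Ss: "S \<in> sets M" "S' \<in> sets M" unfolding S_def S'_def ev_def Dpot_def by measurable
  define \<Delta> where "\<Delta> = cexp M dY S"
  define \<Delta>' where "\<Delta>' = cexp M dY S'"
  have IS: "(LINT x:S|M. dY x) = \<Delta> * measure M S" unfolding \<Delta>_def by (rule setint_cexp[OF P intdY Ss(1)])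
  have IS': "(LINT x:S'|M. dY x) = \<Delta>' * measure M S'" unfolding \<Delta>'_def by (rule setint_cexp[OF P intdY Ss(2)])
  have C1: "J True True (v True True) = J True True (v True False) + \<Delta> * measure M S"
     "q True True (v True True) = q True True (v True False) + measure M S"
    using F6[of "v True True" "v True False" True True] Dv IS by (simp_all add: SW)
  define s where "s = (if v False True \<le> v False False then 1 else -1 :: real)"
  have C0: "J False True (v False True) = J False True (v False False) + s * \<Delta>' * measure M S'
      \<and> q False True (v False True) = q False True (v False False) + s * measure M S'"
  proof (cases "v False True \<le> v False False")
    case True
    have "S' = Wd False True (v False True) (v False False)"
      unfolding S'_def Wd_def ev_def Dpot_def using True by (auto split: if_splits)
    then show ?thesis using F6[OF True, of False True] IS' True by (simp add: s_def)
  next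
    case False
    have "S' = Wd False True (v False False) (v False True)"
      unfolding S'_def Wd_def ev_def Dpot_def using False by (auto split: if_splits)
    then show ?thesis using F6[of "v False False" "v False True" False True] IS' False by (simp add: s_def)
  qed
  have p0: "p g t \<noteq> 0" for g t using pp[of g t] by simp
  have hD: "DID M G T (Dtr v G T V) = measure M S / p True True - s * measure M S' / p False True"
    unfolding DID_def F1 using F3[of True "v True False"] F3[of False "v False False"] C1(2) C0
    by (simp add: add_divide_distrib)
  have hY: "DID M G T (Yobs v G T V Y0 Y1) = \<Delta> * measure M S / p True True - s * \<Delta>' * measure M S' / p False True"
    unfolding DID_def F2 using F5[of True] F5[of False] C1(1) C0 A3
    by (simp add: add_divide_distrib)
  have e11: "ev M (\<lambda>x. Dtr v G T V x = 1) \<inter> ev M (\<lambda>x. G x \<and> T x) = U True True (v True True)"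
    by (auto simp: ev_def U_def Dtr_def split: if_splits)
  have e10: "ev M (\<lambda>x. Dtr v G T V x = 1) \<inter> ev M (\<lambda>x. G x \<and> \<not> T x) = U True False (v True False)"
    by (auto simp: ev_def U_def Dtr_def split: if_splits)
  have c11: "ev M (\<lambda>x. G x \<and> T x) = C True True" by (auto simp: ev_def C_def)
  have c10: "ev M (\<lambda>x. G x \<and> \<not> T x) = C True False" by (auto simp: ev_def C_def)
  have h\<alpha>: "cprob M (ev M (\<lambda>x. Dtr v G T V x = 1)) (ev M (\<lambda>x. G x \<and> T x))
               - cprob M (ev M (\<lambda>x. Dtr v G T V x = 1)) (ev M (\<lambda>x. G x \<and> \<not> T x)) = measure M S / p True True"
    unfolding cprob_def e11 e10 unfolding c11 c10 using F3[of True "v True False"] C1(2)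
    by (simp add: q_def[symmetric] p_def[symmetric] add_divide_distrib)
  have hA5: "Egt M G T (Dtr v G T V) False True - Egt M G T (Dtr v G T V) False False = s * measure M S' / p False True"
    unfolding F1 using F3[of False "v False False"] C0 by (simp add: add_divide_distrib)
  have Dpos: "DID M G T (Dtr v G T V) > 0" using A2b unfolding DID_def by linarith
  have dd: "cexp M (\<lambda>x. Y1 x - Y0 x) (ev M (\<lambda>x. Dpot v G V False x < Dpot v G V True x \<and> G x \<and> T x)) = \<Delta>"
    "cexp M (\<lambda>x. Y1 x - Y0 x) (ev M (\<lambda>x. Dpot v G V False x \<noteq> Dpot v G V True x \<and> \<not> G x \<and> T x)) = \<Delta>'"
    by (simp_all add: \<Delta>_def \<Delta>'_def dY_def S_def S'_def)
  define a where "a = measure M S / p True True"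
  define b where "b = s * measure M S' / p False True"
  have ab: "a - b > 0" using Dpos hD by (simp add: a_def b_def)
  have hY': "DID M G T (Yobs v G T V Y0 Y1) = \<Delta> * a - \<Delta>' * b" unfolding hY a_def b_def by simp
  have k1: "(\<Delta>*a - \<Delta>'*b)/(a-b) = a/(a-b)*\<Delta> + (1 - a/(a-b))*\<Delta>'"
    using ab by (simp add: divide_simps)
  have k2: "b = 0" if "Egt M G T (Dtr v G T V) False True = Egt M G T (Dtr v G T V) False False"
    using hA5 that by (simp add: b_def)
  have k3: "(\<Delta>*a - \<Delta>'*b)/(a-b) = \<Delta>" if "\<Delta> = \<Delta>' \<or> b = 0"
    using that ab by (auto simp: divide_simps algebra_simps)
  show ?thesis
    unfolding Let_def dd h\<alpha> hY' hD a_def[symmetric] b_def[symmetric] hA5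
    using k1 k2 k3 by auto
qed

end
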